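(* Let $F$ be a finite field with $q=|F|$. Let $k,m,n\in\mathbb{N}$ with $k\le m$ and $k\le n+1$. Fix $a\in F^k$. Then $$\sum_{\substack{x\in F^{m+n+1}\\ x_{[0,k)}=a}}\ \sum_{\substack{v\in F^{1\times(m+1)}\\ v\ne 0}}[v\,H_{m,n}(x)=0] \;-\; q\sum_{\substack{x\in F^{m+n+1}\\ x_{[0,k)}=a}}\ \sum_{\substack{v\in F^{1\times m}\\ v\ne 0}}[v\,H_{m-1,n+1}(x)=0] = (q-1)q^{2m-k}.$$
   Context: $\mathbb{N}=\{0,1,2,\ldots\}$. $x_{[0,k)}$ denotes $(x_0,\ldots,x_{k-1})$. For a statement $\mathcal{A}$, $[\mathcal{A}]$ is $1$ if true, $0$ if false. For $x=(x_0,\ldots,x_N)\in F^{N+1}$ and integers $p,p'\ge -1$ with $p+p'\le N$, $H_{p,p'}(x)=(x_{i+j})_{0\le i\le p,\,0\le j\le p'}$. *)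

theory Defs
  imports Main
begin

text \<open>Vectors in F^r are lists of length r (indices 0..r-1).
  The Hankel matrix H_{p,p'}(x) has rows indexed 0..p and columns 0..p';
  we parametrise it by its number of rows r = p+1 and columns c = p'+1,
  so that p = -1 (zero rows) is representable.\<close>

definition hankel_entry :: "'a list \<Rightarrow> nat \<Rightarrow> nat \<Rightarrow> 'a" where
  "hankel_entry x i j = x ! (i + j)"

definition vec_hankel_zero :: "'a::field list \<Rightarrow> nat \<Rightarrow> nat \<Rightarrow> 'a list \<Rightarrow> bool" where
  "vec_hankel_zero x r c v \<longleftrightarrow> (\<forall>j<c. (\<Sum>i<r. v ! i * hankel_entry x i j) = 0)"

definition nonzero_vecs :: "nat \<Rightarrow> 'a::zero list set" where
  "nonzero_vecs r = {v. length v = r \<and> v \<noteq> replicate r 0}"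

end

theory Submission
  imports Defs
begin

lemma fin_len: "finite {xs::'a::finite list. length xs = n}"
  using finite_lists_length_eq[OF finite_UNIV, of n] by simp

lemma card_len: "card {xs::'a::finite list. length xs = n} = card (UNIV::'a set) ^ n"
  using card_lists_length_eq[OF finite_UNIV, of n] by simp

lemma card_update_fiber:
  fixes S :: "'a::finite list set"
  assumes fin: "finite S"
  and len: "\<forall>x\<in>S. p < length x"
  and clos: "\<forall>x\<in>S. \<forall>c. x[p:=c] \<in> S"
  and uniq: "\<forall>x\<in>S. \<exists>!c. E (x[p:=c])"
  shows "card S = card (UNIV::'a set) * card {x\<in>S. E x}"
proof -
  let ?h = "\<lambda>(y,c). y[p:=c]"
  have "bij_betw ?h ({x\<in>S. E x} \<times> (UNIV::'a set)) S"
  proof (rule bij_betwI')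
    fix u w assume u: "u \<in> {x\<in>S. E x} \<times> (UNIV::'a set)" and w: "w \<in> {x\<in>S. E x} \<times> (UNIV::'a set)"
    obtain y c where yc: "u = (y,c)" by (cases u)
    obtain y' c' where yc': "w = (y',c')" by (cases w)
    show "(?h u = ?h w) = (u = w)"
    proof
      assume eq: "?h u = ?h w"
      hence z: "y[p:=c] = y'[p:=c']" using yc yc' by simp
      have yS: "y \<in> S" "E y" and yS': "y' \<in> S" "E y'" using u w yc yc' by auto
      have "c = c'" using arg_cong[OF z, of "\<lambda>l. l ! p"] len yS(1) yS'(1)
        by (metis length_list_update nth_list_update_eq)
      define z0 where "z0 = y[p:=c]"
      have z0S: "z0 \<in> S" using clos yS z0_def by auto
      have e1: "z0[p := y!p] = y" unfolding z0_def by simp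
      have e2: "z0[p := y'!p] = y'" unfolding z0_def using z by simp
      from uniq z0S have "\<exists>!c. E (z0[p:=c])" by auto
      hence "y!p = y'!p" using e1 e2 yS yS' by metis
      thus "u = w" using e1 e2 yc yc' \<open>c = c'\<close> by metis
    qed simp
  next
    fix u assume "u \<in> {x\<in>S. E x} \<times> (UNIV::'a set)" thus "?h u \<in> S" using clos by auto
  next
    fix x assume x: "x \<in> S"
    then obtain c where c: "E (x[p:=c])" using uniq by blast
    have "(x[p:=c], x!p) \<in> {x\<in>S. E x} \<times> (UNIV::'a set)" using c clos x by auto
    moreover have "x = ?h (x[p:=c], x!p)" by simp
    ultimately show "\<exists>u\<in>{x\<in>S. E x} \<times> (UNIV::'a set). x = ?h u" by blast
  qed
  hence "card S = card ({x\<in>S. E x} \<times> (UNIV::'a set))" by (simp add: bij_betw_same_card)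
  thus ?thesis by (simp add: card_cartesian_product)
qed


lemma card_prefix:
  assumes "k \<le> m" "length (a::'a::finite list) = k"
  shows "card {x::'a list. length x = m \<and> take k x = a} = card (UNIV::'a set) ^ (m - k)"
proof -
  have "{x::'a list. length x = m \<and> take k x = a} = (\<lambda>w. a @ w) ` {w. length w = m - k}"
  proof (rule set_eqI, rule iffI)
    fix x assume "x \<in> {x::'a list. length x = m \<and> take k x = a}"
    hence h: "length x = m" "take k x = a" by auto
    hence "x = a @ drop k x" "length (drop k x) = m - k" by (metis append_take_drop_id, simp)
    thus "x \<in> (\<lambda>w. a @ w) ` {w. length w = m - k}" by blast
  qed (use assms in auto)
  moreover have "inj_on (\<lambda>w. a @ w) {w. length w = m - k}" by (simp add: inj_on_def)
  ultimately show ?thesis by (simp add: card_image card_len)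
qed

lemma sum_snoc:
  fixes v y :: "'a::field list"
  assumes "length v = m + 1" "length y = m + T"
  shows "(\<Sum>i<m+1. v!i * (y @ [c])!(i+T)) = (\<Sum>i<m. v!i * y!(i+T)) + v!m * c"
proof -
  have "(\<Sum>i<m. v!i * (y @ [c])!(i+T)) = (\<Sum>i<m. v!i * y!(i+T))"
    by (rule sum.cong) (use assms in \<open>auto simp: nth_append\<close>)
  thus ?thesis using assms by (simp add: nth_append)
qed

lemma countB:
  fixes v :: "'a::{finite,field} list"
  assumes "length v = m+1" "v!m \<noteq> 0" "k \<le> m" "length a = k"
  shows "card {x. length x = m+T \<and> take k x = a \<and> (\<forall>j<T. (\<Sum>i<m+1. v!i * x!(i+j)) = 0)}
     = card (UNIV::'a set)^(m-k)"
proof (induction T)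
  case 0
  then show ?case using card_prefix[OF assms(3,4)] by simp
next
  case (Suc T)
  let ?S = "\<lambda>T. {x. length x = m+T \<and> take k x = a \<and> (\<forall>j<T. (\<Sum>i<m+1. v!i * x!(i+j)) = 0)}"
  define f where "f y = - (\<Sum>i<m. v!i * y!(i+T)) / v!m" for y
  have key: "(\<Sum>i<m+1. v!i * (y @ [c])!(i+T)) = 0 \<longleftrightarrow> c = f y" if "length y = m + T" for y c
    using sum_snoc[OF assms(1) that, of c] assms(2) unfolding f_def
    by (auto simp: field_simps eq_neg_iff_add_eq_0)
  have eqs: "(\<Sum>i<m+1. v!i * (y @ [c])!(i+j)) = (\<Sum>i<m+1. v!i * y!(i+j))"
    if "length y = m + T" "j < T" for y c j
    by (rule sum.cong) (use that in \<open>auto simp: nth_append\<close>)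
  have "?S (Suc T) = (\<lambda>y. y @ [f y]) ` ?S T"
  proof (rule set_eqI, rule iffI)
    fix x assume x: "x \<in> ?S (Suc T)"
    define y where "y = butlast x"
    have lx: "length x = m + T + 1" using x by simp
    have "x \<noteq> []" using lx by auto
    hence xy: "x = y @ [last x]" unfolding y_def by simp
    have ly: "length y = m + T" using lx y_def by simp
    have "take k y = take k x" unfolding y_def using lx assms(3) by (simp add: take_butlast)
    hence tk: "take k y = a" using x by simp
    have allx: "\<forall>j<Suc T. (\<Sum>i<m+1. v!i * x!(i+j)) = 0" using x by simp
    have "\<forall>j<T. (\<Sum>i<m+1. v!i * y!(i+j)) = 0"
    proof (intro allI impI)
      fix j assume j: "j < T"
      have "(\<Sum>i<m+1. v!i * y!(i+j)) = (\<Sum>i<m+1. v!i * x!(i+j))"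
        using eqs[OF ly j, of "last x"] xy by simp
      thus "(\<Sum>i<m+1. v!i * y!(i+j)) = 0" using allx j by simp
    qed
    moreover have "last x = f y"
    proof -
      have "(\<Sum>i<m+1. v!i * (y @ [last x])!(i+T)) = 0" using allx xy by (metis lessI)
      thus ?thesis using key[OF ly] by simp
    qed
    moreover note tk
    ultimately show "x \<in> (\<lambda>y. y @ [f y]) ` ?S T" using ly xy by auto
  next
    fix x assume "x \<in> (\<lambda>y. y @ [f y]) ` ?S T"
    then obtain y where y: "y \<in> ?S T" and x: "x = y @ [f y]" by blast
    have ly: "length y = m + T" using y by simp
    have "take k x = a" using y x assms(3) by simp
    moreover have "\<forall>j<Suc T. (\<Sum>i<m+1. v!i * x!(i+j)) = 0"
    proof (intro allI impI)
      fix j assume "j < Suc T"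
      thus "(\<Sum>i<m+1. v!i * x!(i+j)) = 0"
        using key[OF ly, of "f y"] eqs[OF ly, of j "f y"] y x by (cases "j = T") auto
    qed
    ultimately show "x \<in> ?S (Suc T)" using ly x by simp
  qed
  moreover have "inj_on (\<lambda>y. y @ [f y]) (?S T)" by (auto simp: inj_on_def)
  ultimately have "card (?S (Suc T)) = card (?S T)" by (simp add: card_image)
  thus ?case using Suc by simp
qed


lemma sum_pad0:
  fixes v x :: "'a::field list"
  assumes "length v = m"
  shows "(\<Sum>i<m+1. (v@[0])!i * hankel_entry x i j) = (\<Sum>i<m. v!i * x!(i+j))"
proof -
  have "(\<Sum>i<m. (v@[0])!i * hankel_entry x i j) = (\<Sum>i<m. v!i * x!(i+j))"
    by (rule sum.cong) (use assms in \<open>auto simp: nth_append hankel_entry_def\<close>)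
  thus ?thesis using assms by (simp add: nth_append)
qed

lemma countA:
  fixes v :: "'a::{finite,field} list" and a :: "'a list"
  assumes vnz: "v \<in> nonzero_vecs m" and kn: "k \<le> n+1"
  shows "card {x\<in>{x. length x = m+n+1 \<and> take k x = a}. vec_hankel_zero x (m+1) (n+1) (v@[0])}
       = card (UNIV::'a set) * card {x\<in>{x. length x = m+n+1 \<and> take k x = a}. vec_hankel_zero x m (n+2) v}"
proof -
  define X where "X = {x::'a list. length x = m+n+1 \<and> take k x = a}"
  have lv: "length v = m" using vnz by (simp add: nonzero_vecs_def)
  have "\<exists>i<m. v!i \<noteq> 0"
  proof (rule ccontr)
    assume "\<not> ?thesis"
    hence "v = replicate m 0" using lv by (simp add: list_eq_iff_nth_eq)
    thus False using vnz by (simp add: nonzero_vecs_def)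
  qed
  define D where "D = {i. i<m \<and> v!i \<noteq> 0}"
  define d where "d = Max D"
  have finD: "finite D" unfolding D_def by simp
  have "D \<noteq> {}" unfolding D_def using \<open>\<exists>i<m. v!i \<noteq> 0\<close> by auto
  hence dD: "d \<in> D" unfolding d_def using finD by simp
  hence dm: "d < m" and vd: "v!d \<noteq> 0" unfolding D_def by auto
  have dmax: "i \<le> d" if "i < m" "v!i \<noteq> 0" for i
    unfolding d_def using finD that by (simp add: D_def)
  define Q where "Q x j \<longleftrightarrow> (\<Sum>i<m. v!i * x!(i+j)) = (0::'a)" for x :: "'a list" and j
  define S where "S = {x\<in>X. \<forall>j<n+1. Q x j}"
  have S1: "{x\<in>X. vec_hankel_zero x (m+1) (n+1) (v@[0])} = S"
    unfolding S_def Q_def vec_hankel_zero_def using sum_pad0[OF lv] by simp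
  have S2: "{x\<in>X. vec_hankel_zero x m (n+2) v} = {x\<in>S. Q x (n+1)}"
  proof -
    have "(\<forall>j<n+2. Q x j) \<longleftrightarrow> (\<forall>j<n+1. Q x j) \<and> Q x (n+1)" for x
      by (auto simp: less_Suc_eq)
    thus ?thesis unfolding S_def Q_def vec_hankel_zero_def hankel_entry_def by auto
  qed
  define p where "p = d + n + 1"
  have finS: "finite S"
    by (rule finite_subset[OF _ fin_len[of "m+n+1"]]) (auto simp: S_def X_def)
  have len: "\<forall>x\<in>S. p < length x" using dm by (auto simp: S_def X_def p_def)
  have clos: "\<forall>x\<in>S. \<forall>c. x[p:=c] \<in> S"
  proof (intro ballI allI)
    fix x c assume x: "x \<in> S"
    have "take k (x[p:=c]) = take k x" using kn by (simp add: p_def)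
    moreover have "Q (x[p:=c]) j" if j: "j < n+1" for j
    proof -
      have "(\<Sum>i<m. v!i * x[p:=c]!(i+j)) = (\<Sum>i<m. v!i * x!(i+j))"
      proof (rule sum.cong)
        fix i assume "i \<in> {..<m}"
        hence "i < m" by simp
        show "v!i * x[p:=c]!(i+j) = v!i * x!(i+j)"
        proof (cases "v!i = 0")
          case False
          hence "i \<le> d" using dmax \<open>i<m\<close> by simp
          hence "i + j \<noteq> p" using j by (simp add: p_def)
          thus ?thesis by simp
        qed simp
      qed simp
      thus ?thesis using x j by (simp add: Q_def S_def)
    qed
    ultimately show "x[p:=c] \<in> S" using x by (simp add: S_def X_def)
  qed
  have uniq: "\<forall>x\<in>S. \<exists>!c. Q (x[p:=c]) (n+1)"
  proof
    fix x assume x: "x \<in> S"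
    define R where "R = (\<Sum>i\<in>{..<m}-{d}. v!i * x!(i+(n+1)))"
    have "Q (x[p:=c]) (n+1) \<longleftrightarrow> v!d * c + R = 0" for c
    proof -
      have "(\<Sum>i<m. v!i * x[p:=c]!(i+(n+1))) = v!d * x[p:=c]!(d+(n+1)) + (\<Sum>i\<in>{..<m}-{d}. v!i * x[p:=c]!(i+(n+1)))"
        using dm by (subst sum.remove[of _ d]) auto
      also have "(\<Sum>i\<in>{..<m}-{d}. v!i * x[p:=c]!(i+(n+1))) = R"
        unfolding R_def by (rule sum.cong) (auto simp: p_def)
      also have "x[p:=c]!(d+(n+1)) = c" using len x by (simp add: p_def)
      finally show ?thesis by (simp add: Q_def)
    qed
    moreover have "\<exists>!c. v!d * c + R = 0"
    proof
      show "v!d * (- R / v!d) + R = 0" using vd by simp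
    next
      fix c assume "v!d * c + R = 0"
      thus "c = - R / v!d" using vd by (simp add: field_simps eq_neg_iff_add_eq_0)
    qed
    ultimately show "\<exists>!c. Q (x[p:=c]) (n+1)" by simp
  qed
  have "card S = card (UNIV::'a set) * card {x\<in>S. Q x (n+1)}"
    by (rule card_update_fiber[OF finS len clos uniq])
  thus ?thesis using S1 S2 unfolding X_def by simp
qed


lemma card_lastnz:
  "card {v::'a::{finite,field} list. length v = m+1 \<and> v!m \<noteq> 0}
     = card (UNIV::'a set) ^ m * (card (UNIV::'a set) - 1)"
proof -
  have "{v::'a list. length v = m+1 \<and> v!m \<noteq> 0} = (\<lambda>(w,c). w @ [c]) ` ({w. length w = m} \<times> (UNIV - {0}))"
  proof (rule set_eqI, rule iffI)
    fix v :: "'a list" assume v: "v \<in> {v. length v = m+1 \<and> v!m \<noteq> 0}"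
    hence "v \<noteq> []" by auto
    hence "v = butlast v @ [last v]" by simp
    moreover have "last v = v!m" using v \<open>v \<noteq> []\<close> by (auto simp: last_conv_nth)
    ultimately show "v \<in> (\<lambda>(w,c). w @ [c]) ` ({w. length w = m} \<times> (UNIV - {0}))"
      using v by (intro image_eqI[of _ _ "(butlast v, last v)"]) auto
  qed (auto simp: nth_append)
  moreover have "inj_on (\<lambda>(w,c). w @ [c]) ({w::'a list. length w = m} \<times> (UNIV - {0::'a}))"
    by (auto simp: inj_on_def)
  ultimately show ?thesis
    by (simp add: card_image card_cartesian_product card_len card_Diff_singleton)
qed

lemma sum_bool_card:
  assumes "finite A"
  shows "(\<Sum>x\<in>A. (of_bool (P x) :: int)) = int (card {x\<in>A. P x})"
  using assms by (simp add: Collect_conj_eq Int_commute)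

theorem lemma15:
  fixes a :: "'a::{finite,field} list" and k m n :: nat
  assumes "k \<le> m" and "k \<le> n + 1" and "length a = k"
  shows "(\<Sum>x\<in>{x. length x = m + n + 1 \<and> take k x = a}.
            (\<Sum>v\<in>nonzero_vecs (m + 1). (of_bool (vec_hankel_zero x (m + 1) (n + 1) v) :: int)))
       - int (card (UNIV :: 'a set)) * (\<Sum>x\<in>{x. length x = m + n + 1 \<and> take k x = a}.
            (\<Sum>v\<in>nonzero_vecs m. (of_bool (vec_hankel_zero x m (n + 2) v) :: int)))
       = (int (card (UNIV :: 'a set)) - 1) * int (card (UNIV :: 'a set)) ^ (2 * m - k)"
proof -
  define X where "X = {x::'a list. length x = m + n + 1 \<and> take k x = a}"
  define q where "q = card (UNIV::'a set)"
  have q1: "q \<ge> 1" unfolding q_def by (simp add: Suc_leI finite_UNIV_card_ge_0)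
  have finX: "finite X" by (rule finite_subset[OF _ fin_len[of "m+n+1"]]) (auto simp: X_def)
  have finNZ: "finite (nonzero_vecs r :: 'a list set)" for r
    by (rule finite_subset[OF _ fin_len[of r]]) (auto simp: nonzero_vecs_def)
  define c1 where "c1 v = card {x\<in>X. vec_hankel_zero x (m+1) (n+1) v}" for v
  define c2 where "c2 v = card {x\<in>X. vec_hankel_zero x m (n+2) v}" for v
  have L1: "(\<Sum>x\<in>X. (\<Sum>v\<in>nonzero_vecs (m + 1). (of_bool (vec_hankel_zero x (m + 1) (n + 1) v) :: int)))
      = (\<Sum>v\<in>nonzero_vecs (m+1). int (c1 v))"
    by (subst sum.swap) (simp add: sum_bool_card[OF finX] c1_def)
  have L2: "(\<Sum>x\<in>X. (\<Sum>v\<in>nonzero_vecs m. (of_bool (vec_hankel_zero x m (n + 2) v) :: int)))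
      = (\<Sum>v\<in>nonzero_vecs m. int (c2 v))"
    by (subst sum.swap) (simp add: sum_bool_card[OF finX] c2_def)
  define A where "A = (\<lambda>v. v @ [0::'a]) ` nonzero_vecs m"
  define B where "B = {v::'a list. length v = m+1 \<and> v!m \<noteq> 0}"
  have split: "nonzero_vecs (m+1) = A \<union> B"
  proof (rule set_eqI, rule iffI)
    fix v :: "'a list" assume v: "v \<in> nonzero_vecs (m+1)"
    show "v \<in> A \<union> B"
    proof (cases "v!m = 0")
      case True
      have "v \<noteq> []" using v by (auto simp: nonzero_vecs_def)
      hence e: "v = butlast v @ [last v]" by simp
      have "last v = v!m" using v \<open>v \<noteq> []\<close> by (auto simp: last_conv_nth nonzero_vecs_def)
      hence e2: "v = butlast v @ [0]" using e True by simp
      have "butlast v \<noteq> replicate m 0"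
      proof
        assume "butlast v = replicate m 0"
        hence "v = replicate (m+1) 0" using e2 by (simp add: replicate_append_same)
        thus False using v by (simp add: nonzero_vecs_def)
      qed
      hence "butlast v \<in> nonzero_vecs m" using v by (simp add: nonzero_vecs_def)
      thus ?thesis using e2 unfolding A_def by blast
    qed (use v in \<open>auto simp: B_def nonzero_vecs_def\<close>)
  next
    fix v :: "'a list" assume "v \<in> A \<union> B"
    thus "v \<in> nonzero_vecs (m+1)"
    proof
      assume "v \<in> A"
      then obtain w where w: "w \<in> nonzero_vecs m" "v = w @ [0]" unfolding A_def by blast
      have "w @ [0] \<noteq> replicate m 0 @ [0]" using w(1) by (simp add: nonzero_vecs_def)
      thus ?thesis using w by (simp add: nonzero_vecs_def replicate_append_same)
    next
      assume "v \<in> B"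
      hence vB: "length v = m+1" "v!m \<noteq> 0" by (auto simp: B_def)
      have "v \<noteq> replicate (m+1) 0"
      proof
        assume "v = replicate (m+1) 0"
        hence "v!m = 0" by (simp del: replicate.simps)
        thus False using vB by simp
      qed
      thus ?thesis using vB by (simp add: nonzero_vecs_def del: replicate.simps)
    qed
  qed
  have disj: "A \<inter> B = {}" by (auto simp: A_def B_def nonzero_vecs_def nth_append)
  have finA: "finite A" unfolding A_def using finNZ by simp
  have finB: "finite B" by (rule finite_subset[OF _ fin_len[of "m+1"]]) (auto simp: B_def)
  have sumA: "(\<Sum>v\<in>A. int (c1 v)) = int q * (\<Sum>v\<in>nonzero_vecs m. int (c2 v))"
  proof -
    have "(\<Sum>v\<in>A. int (c1 v)) = (\<Sum>w\<in>nonzero_vecs m. int (c1 (w @ [0])))"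
      unfolding A_def by (rule sum.reindex_cong[of "\<lambda>v. v @ [0]"]) (auto simp: inj_on_def)
    also have "\<dots> = (\<Sum>w\<in>nonzero_vecs m. int q * int (c2 w))"
      by (rule sum.cong) (use countA[OF _ assms(2), of _ m a] in \<open>auto simp: c1_def c2_def X_def q_def\<close>)
    finally show ?thesis by (simp add: sum_distrib_left)
  qed
  have sumB: "(\<Sum>v\<in>B. int (c1 v)) = int (q ^ m * (q - 1)) * int (q ^ (m - k))"
  proof -
    have "c1 v = q ^ (m - k)" if "v \<in> B" for v
    proof -
      have "{x\<in>X. vec_hankel_zero x (m+1) (n+1) v} =
        {x. length x = m+(n+1) \<and> take k x = a \<and> (\<forall>j<n+1. (\<Sum>i<m+1. v!i * x!(i+j)) = 0)}"
        unfolding X_def vec_hankel_zero_def hankel_entry_def by auto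
      thus ?thesis using countB[of v m k a "n+1"] that assms(1,3)
        unfolding c1_def q_def B_def by simp
    qed
    hence "(\<Sum>v\<in>B. int (c1 v)) = (\<Sum>v\<in>B. int (q ^ (m - k)))" by simp
    also have "\<dots> = int (card B) * int (q ^ (m - k))" by simp
    also have "\<dots> = int (q ^ m * (q - 1)) * int (q ^ (m - k))"
      unfolding B_def q_def card_lastnz by (rule refl)
    finally show ?thesis .
  qed
  have "(\<Sum>v\<in>nonzero_vecs (m+1). int (c1 v)) = (\<Sum>v\<in>A. int (c1 v)) + (\<Sum>v\<in>B. int (c1 v))"
    unfolding split by (rule sum.union_disjoint[OF finA finB disj])
  hence main: "(\<Sum>v\<in>nonzero_vecs (m+1). int (c1 v)) - int q * (\<Sum>v\<in>nonzero_vecs m. int (c2 v))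
      = int (q ^ m * (q - 1)) * int (q ^ (m - k))" using sumA sumB by simp
  have "int (q ^ m * (q - 1)) * int (q ^ (m - k)) = (int q - 1) * int q ^ (2 * m - k)"
  proof -
    have "q ^ m * q ^ (m - k) = q ^ (2 * m - k)" using assms(1) by (simp add: power_add[symmetric] mult_2)
    hence "int (q ^ m * (q - 1)) * int (q ^ (m - k)) = int (q - 1) * int (q ^ (2*m-k))"
      by (metis mult.commute mult.left_commute of_nat_mult)
    thus ?thesis using q1 by (simp add: of_nat_diff)
  qed
  thus ?thesis using main L1 L2 unfolding X_def q_def by simp
qed

end
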